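(* For $g\ge1$ and $n\ge1$, as modules over $\mathsf{Sp}(2g,2)$ we have $\Gamma(2g,2^n)/\Gamma(2g,2^n,2^{n+1})\cong U$ and $\Gamma(2g,2^n,2^{n+1})/\Gamma(2g,2^{n+1})\cong\Lambda^2(U)$.
   Context: $\mathsf{Sp}(2g,\mathbb Z)$ is the group of integer matrices $X$ with $X^tJX=J$, $J=\begin{pmatrix}0&I\\-I&0\end{pmatrix}$; $\mathsf{Sp}(2g,2)$ is the same over $\mathbb F_2$. $\Gamma(2g,N)$ is the kernel of $\mathsf{Sp}(2g,\mathbb Z)\to\mathsf{Sp}(2g,\mathbb Z/N)$. The Igusa subgroup $\Gamma(2g,N,2N)$ consists of the matrices $\begin{pmatrix}A&B\\C&D\end{pmatrix}\in\Gamma(2g,N)$ such that all diagonal entries of $AB^t$ and of $CD^t$ are divisible by $2N$. The quotients in question are elementary abelian $2$-groups on which $\mathsf{Sp}(2g,\mathbb Z)$ acts by conjugation, the action factoring through $\mathsf{Sp}(2g,2)$. $U=\mathbb F_2^{2g}$ is the natural module, and $\Lambda^2(U)\subseteq U\otimes U$ is the subspace spanned by the elements $u\otimes u'+u'\otimes u$. *)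

theory Defs
  imports "Jordan_Normal_Form.Matrix" "HOL-Algebra.Coset" "HOL-Library.Z2"
begin

definition Jmat :: "nat \<Rightarrow> int mat" where
  "Jmat g = four_block_mat (0\<^sub>m g g) (1\<^sub>m g) (- 1\<^sub>m g) (0\<^sub>m g g)"

definition Sp :: "nat \<Rightarrow> int mat set" where
  "Sp g = {X \<in> carrier_mat (2*g) (2*g). transpose_mat X * Jmat g * X = Jmat g}"

definition Gamma :: "nat \<Rightarrow> int \<Rightarrow> int mat set" where
  "Gamma g N = {X \<in> Sp g. \<forall>i<2*g. \<forall>j<2*g. N dvd (X - 1\<^sub>m (2*g)) $$ (i,j)}"

(* Igusa subgroup Gamma(2g, N, 2N) *)
definition Igusa :: "nat \<Rightarrow> int \<Rightarrow> int mat set" where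
  "Igusa g N = {X \<in> Gamma g N.
     (case split_block X g g of (A, B, C, D) \<Rightarrow>
        (\<forall>i<g. (2*N) dvd (A * transpose_mat B) $$ (i,i)) \<and>
        (\<forall>i<g. (2*N) dvd (C * transpose_mat D) $$ (i,i)))}"

definition matgrp :: "nat \<Rightarrow> int mat set \<Rightarrow> int mat monoid" where
  "matgrp g S = \<lparr>carrier = S, mult = (*), one = 1\<^sub>m (2*g)\<rparr>"

definition red2 :: "int mat \<Rightarrow> bit mat" where
  "red2 X = map_mat of_int X"

definition Ugrp :: "nat \<Rightarrow> bit vec monoid" where
  "Ugrp g = \<lparr>carrier = carrier_vec (2*g), mult = (+), one = 0\<^sub>v (2*g)\<rparr>"

(* U \<otimes> U is modelled by 2g x 2g matrices over F_2, u \<otimes> u' \<mapsto> u u'^T;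
   the action X (u \<otimes> u') = Xu \<otimes> Xu' becomes M \<mapsto> X M X^T *)
definition tens :: "bit vec \<Rightarrow> bit vec \<Rightarrow> bit mat" where
  "tens u v = mat (dim_vec u) (dim_vec v) (\<lambda>(i,j). u $ i * v $ j)"

inductive_set Lambda2 :: "nat \<Rightarrow> bit mat set" for g :: nat where
  zero: "0\<^sub>m (2*g) (2*g) \<in> Lambda2 g"
| add: "M \<in> Lambda2 g \<Longrightarrow> u \<in> carrier_vec (2*g) \<Longrightarrow> u' \<in> carrier_vec (2*g) \<Longrightarrow>
        M + (tens u u' + tens u' u) \<in> Lambda2 g"

definition Lambda2grp :: "nat \<Rightarrow> bit mat monoid" where
  "Lambda2grp g = \<lparr>carrier = Lambda2 g, mult = (+), one = 0\<^sub>m (2*g) (2*g)\<rparr>"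

definition conjset :: "int mat \<Rightarrow> int mat \<Rightarrow> int mat set \<Rightarrow> int mat set" where
  "conjset X Xi S = (\<lambda>Y. X * Y * Xi) ` S"

end

theory Submission
  imports Defs "Jordan_Normal_Form.Determinant"
begin


lemma J_carrier[simp]: "Jmat g \<in> carrier_mat (2*g) (2*g)" unfolding Jmat_def by (simp add: mult_2)
lemma J_dims[simp]: "dim_row (Jmat g) = 2*g" "dim_col (Jmat g) = 2*g"
  using J_carrier[of g] unfolding carrier_mat_def by auto

lemma J_index: "i < 2*g \<Longrightarrow> j < 2*g \<Longrightarrow> Jmat g $$ (i,j) =
  (if i < g \<and> j = i + g then 1 else if g \<le> i \<and> i = j + g then -1 else 0)"
  unfolding Jmat_def by auto

lemma J_transpose: "transpose_mat (Jmat g) = - Jmat g"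
  by (rule eq_matI) (auto simp: J_index)

lemma uminus_zero_m: "- 0\<^sub>m a b = (0\<^sub>m a b :: 'a::group_add mat)"
  by (rule eq_matI) auto

lemma J_J: "Jmat g * Jmat g = - 1\<^sub>m (2*g)"
proof -
  have "Jmat g * Jmat g = four_block_mat (0\<^sub>m g g * 0\<^sub>m g g + 1\<^sub>m g * - 1\<^sub>m g) (0\<^sub>m g g * 1\<^sub>m g + 1\<^sub>m g * 0\<^sub>m g g)
     (- 1\<^sub>m g * 0\<^sub>m g g + 0\<^sub>m g g * - 1\<^sub>m g) (- 1\<^sub>m g * 1\<^sub>m g + 0\<^sub>m g g * 0\<^sub>m g g)"
    unfolding Jmat_def by (rule mult_four_block_mat) auto
  also have "\<dots> = four_block_mat (- 1\<^sub>m g) (0\<^sub>m g g) (0\<^sub>m g g) (- 1\<^sub>m g)"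
    by (simp del: four_block_zero_mat four_block_one_mat add: uminus_zero_m)
  also have "\<dots> = - 1\<^sub>m (2*g)"
  proof (rule eq_matI)
    fix i j assume "i < dim_row (- 1\<^sub>m (2 * g))" "j < dim_col (- 1\<^sub>m (2 * g))"
    then show "four_block_mat (- 1\<^sub>m g) (0\<^sub>m g g) (0\<^sub>m g g) (- 1\<^sub>m g) $$ (i, j) = (- 1\<^sub>m (2 * g) :: int mat) $$ (i, j)"
      by (auto simp add: index_mat_four_block)
  qed auto
  finally show ?thesis .
qed

lemma JT_J: "transpose_mat (Jmat g) * Jmat g = 1\<^sub>m (2*g)"
proof -
  have "transpose_mat (Jmat g) * Jmat g = - Jmat g * Jmat g" by (simp only: J_transpose)
  also have "\<dots> = - (Jmat g * Jmat g)" by (rule uminus_mult_left_mat) simp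
  also have "\<dots> = - (- 1\<^sub>m (2*g))" by (simp only: J_J)
  also have "\<dots> = 1\<^sub>m (2*g)" by (rule uminus_uminus_mat)
  finally show ?thesis .
qed
lemma J_JT: "Jmat g * transpose_mat (Jmat g) = 1\<^sub>m (2*g)"
proof -
  have "Jmat g * transpose_mat (Jmat g) = Jmat g * - Jmat g" by (simp only: J_transpose)
  also have "\<dots> = - (Jmat g * Jmat g)" by (rule uminus_mult_right_mat) simp
  also have "\<dots> = - (- 1\<^sub>m (2*g))" by (simp only: J_J)
  also have "\<dots> = 1\<^sub>m (2*g)" by (rule uminus_uminus_mat)
  finally show ?thesis .
qed

lemma mx_assoc: assumes "dim_col A = dim_row B" "dim_col B = dim_row C" shows "A * B * C = A * (B * C)"
proof -
  have c: "A \<in> carrier_mat (dim_row A) (dim_col A)" "B \<in> carrier_mat (dim_col A) (dim_col B)" "C \<in> carrier_mat (dim_col B) (dim_col C)"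
    using assms by (auto intro!: carrier_matI)
  show ?thesis by (rule assoc_mult_mat[OF c])
qed
lemma mx_distl: assumes "dim_col A = dim_row B" "dim_row B = dim_row C" "dim_col B = dim_col C"
  shows "A * (B + C) = A * B + A * (C :: 'a :: semiring_0 mat)"
proof -
  have c: "A \<in> carrier_mat (dim_row A) (dim_col A)" "B \<in> carrier_mat (dim_col A) (dim_col B)" "C \<in> carrier_mat (dim_col A) (dim_col B)"
    using assms by (auto intro!: carrier_matI)
  show ?thesis by (rule mult_add_distrib_mat[OF c])
qed
lemma mx_distr: assumes "dim_row A = dim_row B" "dim_col A = dim_col B" "dim_col A = dim_row C"
  shows "(A + B) * C = A * C + B * (C :: 'a :: semiring_0 mat)"
proof -
  have c: "A \<in> carrier_mat (dim_row A) (dim_col A)" "B \<in> carrier_mat (dim_row A) (dim_col A)" "C \<in> carrier_mat (dim_col A) (dim_col C)"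
    using assms by (auto intro!: carrier_matI)
  show ?thesis by (rule add_mult_distrib_mat[OF c])
qed
lemma mx_smult_r: assumes "dim_col A = dim_row B" shows "A * (k \<cdot>\<^sub>m B) = (k :: 'a :: comm_semiring_0) \<cdot>\<^sub>m (A * B)"
proof -
  have c: "A \<in> carrier_mat (dim_row A) (dim_col A)" "B \<in> carrier_mat (dim_col A) (dim_col B)"
    using assms by (auto intro!: carrier_matI)
  show ?thesis by (rule mult_smult_distrib[OF c])
qed
lemma mx_smult_l: assumes "dim_col A = dim_row B" shows "(k \<cdot>\<^sub>m A) * B = (k :: 'a :: comm_semiring_0) \<cdot>\<^sub>m (A * B)"
proof -
  have c: "A \<in> carrier_mat (dim_row A) (dim_col A)" "B \<in> carrier_mat (dim_col A) (dim_col B)"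
    using assms by (auto intro!: carrier_matI)
  show ?thesis by (rule mult_smult_assoc_mat[OF c])
qed
lemma mx_smult_add: assumes "dim_row A = dim_row B" "dim_col A = dim_col B"
  shows "k \<cdot>\<^sub>m (A + B) = (k :: 'a :: semiring) \<cdot>\<^sub>m A + k \<cdot>\<^sub>m B"
proof -
  have c: "A \<in> carrier_mat (dim_row A) (dim_col A)" "B \<in> carrier_mat (dim_row A) (dim_col A)"
    using assms by (auto intro!: carrier_matI)
  show ?thesis by (rule add_smult_distrib_left_mat[OF c])
qed
lemma mx_smult_smult: "k \<cdot>\<^sub>m (l \<cdot>\<^sub>m A) = (k * l :: 'a :: semigroup_mult) \<cdot>\<^sub>m A"
  by (rule eq_matI) (simp_all add: mult.assoc)
lemma mx_add_assoc: assumes "dim_row A = dim_row B" "dim_col A = dim_col B" "dim_row B = dim_row C" "dim_col B = dim_col C"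
  shows "A + B + C = A + (B + (C :: 'a :: monoid_add mat))"
proof -
  have c: "A \<in> carrier_mat (dim_row A) (dim_col A)" "B \<in> carrier_mat (dim_row A) (dim_col A)" "C \<in> carrier_mat (dim_row A) (dim_col A)"
    using assms by (auto intro!: carrier_matI)
  show ?thesis by (rule assoc_add_mat[OF c])
qed
lemma mx_add_comm: assumes "dim_row A = dim_row B" "dim_col A = dim_col B" shows "A + B = B + (A :: 'a :: comm_monoid_add mat)"
proof -
  have c: "A \<in> carrier_mat (dim_row A) (dim_col A)" "B \<in> carrier_mat (dim_row A) (dim_col A)"
    using assms by (auto intro!: carrier_matI)
  show ?thesis by (rule comm_add_mat[OF c])
qed
lemma mx_transpose_mult: assumes "dim_col A = dim_row B" shows "transpose_mat (A * B) = transpose_mat B * transpose_mat (A :: 'a :: comm_semiring_0 mat)"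
proof -
  have c: "A \<in> carrier_mat (dim_row A) (dim_col A)" "B \<in> carrier_mat (dim_col A) (dim_col B)"
    using assms by (auto intro!: carrier_matI)
  show ?thesis by (rule transpose_mult[OF c])
qed
lemma mx_transpose_add: assumes "dim_row A = dim_row B" "dim_col A = dim_col B" shows "transpose_mat (A + B) = transpose_mat A + transpose_mat B"
proof -
  have c: "A \<in> carrier_mat (dim_row A) (dim_col A)" "B \<in> carrier_mat (dim_row A) (dim_col A)"
    using assms by (auto intro!: carrier_matI)
  show ?thesis by (rule transpose_add[OF c])
qed
lemma mx_transpose_smult: "transpose_mat (k \<cdot>\<^sub>m A) = k \<cdot>\<^sub>m transpose_mat A"
  by (rule eq_matI) simp_all

lemmas mx = mx_assoc mx_distl mx_distr mx_smult_r mx_smult_l mx_smult_add mx_smult_smult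
  mx_transpose_mult mx_transpose_add mx_transpose_smult

lemma Sp_carrier: "X \<in> Sp g \<Longrightarrow> X \<in> carrier_mat (2*g) (2*g)"
  unfolding Sp_def by auto

lemma Sp_eq: "X \<in> Sp g \<Longrightarrow> transpose_mat X * Jmat g * X = Jmat g"
  unfolding Sp_def by auto

lemma Sp_one: "1\<^sub>m (2*g) \<in> Sp g"
  unfolding Sp_def by simp

lemma Sp_mult: assumes X: "X \<in> Sp g" and Y: "Y \<in> Sp g" shows "X * Y \<in> Sp g"
proof -
  have cX: "X \<in> carrier_mat (2*g) (2*g)" and cY: "Y \<in> carrier_mat (2*g) (2*g)"
    using X Y Sp_carrier by auto
  then have dX: "dim_row X = 2*g" "dim_col X = 2*g" "dim_row Y = 2*g" "dim_col Y = 2*g" by auto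
  have "transpose_mat (X * Y) * Jmat g * (X * Y) = transpose_mat Y * ((transpose_mat X * Jmat g * X) * Y)"
    using cX cY by (simp add: mx dX del: assoc_mult_mat)
  also have "\<dots> = transpose_mat Y * (Jmat g * Y)" by (simp only: Sp_eq[OF X])
  also have "\<dots> = Jmat g" using Sp_eq[OF Y] mx_assoc[of "transpose_mat Y" "Jmat g" Y] dX by simp
  finally show ?thesis unfolding Sp_def using cX cY by auto
qed

lemma int_left_right_inverse:
  assumes A: "(A :: int mat) \<in> carrier_mat n n" and B: "B \<in> carrier_mat n n" and AB: "A * B = 1\<^sub>m n"
  shows "B * A = 1\<^sub>m n"
proof -
  let ?h = "map_mat (of_int :: int \<Rightarrow> rat)"
  have "?h A * ?h B = 1\<^sub>m n"
    using of_int_hom.mat_hom_mult[OF A B] AB of_int_hom.mat_hom_one by metis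
  then have "?h B * ?h A = 1\<^sub>m n"
    by (rule mat_mult_left_right_inverse[rotated 2]) (use A B in auto)
  then have "?h (B * A) = ?h (1\<^sub>m n)"
    using of_int_hom.mat_hom_mult[OF B A] of_int_hom.mat_hom_one by metis
  then show ?thesis by (rule of_int_hom.mat_hom_inj)
qed

definition spinv :: "nat \<Rightarrow> int mat \<Rightarrow> int mat" where
  "spinv g X = transpose_mat (Jmat g) * transpose_mat X * Jmat g"

lemma spinv_carrier: "X \<in> Sp g \<Longrightarrow> spinv g X \<in> carrier_mat (2*g) (2*g)"
  unfolding spinv_def using Sp_carrier by auto

lemma spinv_left: assumes X: "X \<in> Sp g" shows "spinv g X * X = 1\<^sub>m (2*g)"
proof -
  have cX: "X \<in> carrier_mat (2*g) (2*g)" using X Sp_carrier by auto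
  then have dX: "dim_row X = 2*g" "dim_col X = 2*g" by auto
  have "spinv g X * X = transpose_mat (Jmat g) * (transpose_mat X * Jmat g * X)"
    unfolding spinv_def using cX by (simp add: mx dX del: assoc_mult_mat)
  also have "\<dots> = 1\<^sub>m (2*g)" using Sp_eq[OF X] JT_J by simp
  finally show ?thesis .
qed

lemma spinv_right: assumes X: "X \<in> Sp g" shows "X * spinv g X = 1\<^sub>m (2*g)"
  using int_left_right_inverse[OF spinv_carrier[OF X] Sp_carrier[OF X] spinv_left[OF X]] .

lemma Sp_eq2: assumes X: "X \<in> Sp g" shows "X * Jmat g * transpose_mat X = Jmat g"
proof -
  have cX: "X \<in> carrier_mat (2*g) (2*g)" using X Sp_carrier by auto
  then have dX: "dim_row X = 2*g" "dim_col X = 2*g" by auto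
  have "X * transpose_mat (Jmat g) * transpose_mat X = (X * spinv g X) * transpose_mat (Jmat g)"
    unfolding spinv_def using cX by (simp add: mx dX J_JT del: assoc_mult_mat)
  also have "\<dots> = transpose_mat (Jmat g)" using spinv_right[OF X] by simp
  finally have "X * transpose_mat (Jmat g) * transpose_mat X = transpose_mat (Jmat g)" .
  then have "- (X * Jmat g * transpose_mat X) = - Jmat g"
    unfolding J_transpose using cX by simp
  then show ?thesis by simp
qed

lemma spinv_Sp: assumes X: "X \<in> Sp g" shows "spinv g X \<in> Sp g"
proof -
  have cX: "X \<in> carrier_mat (2*g) (2*g)" using X Sp_carrier by auto
  then have dX: "dim_row X = 2*g" "dim_col X = 2*g" by auto
  have "transpose_mat (spinv g X) * Jmat g * spinv g X =
     transpose_mat (Jmat g) * ((X * (Jmat g * Jmat g * transpose_mat (Jmat g)) * transpose_mat X) * Jmat g)"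
    unfolding spinv_def using cX
    by (simp add: mx dX del: assoc_mult_mat)
  also have "Jmat g * Jmat g * transpose_mat (Jmat g) = Jmat g"
    by (simp add: mx_assoc J_JT del: assoc_mult_mat)
  also have "transpose_mat (Jmat g) * ((X * Jmat g * transpose_mat X) * Jmat g) = Jmat g"
    unfolding Sp_eq2[OF X] using JT_J mx_assoc[of "transpose_mat (Jmat g)" "Jmat g" "Jmat g"] by simp
  finally show ?thesis unfolding Sp_def using spinv_carrier[OF X] by simp
qed

lemma Sp_inv_unique: assumes X: "X \<in> Sp g" and Xi: "Xi \<in> carrier_mat (2*g) (2*g)"
  and XXi: "X * Xi = 1\<^sub>m (2*g)" shows "Xi = spinv g X"
proof -
  have cX: "X \<in> carrier_mat (2*g) (2*g)" using X Sp_carrier by auto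
  then have dX: "dim_row X = 2*g" "dim_col X = 2*g" by auto
  have "Xi = (spinv g X * X) * Xi" using spinv_left[OF X] Xi by simp
  also have "\<dots> = spinv g X * (X * Xi)" using spinv_carrier[OF X] cX Xi by simp
  finally show ?thesis using XXi spinv_carrier[OF X] by simp
qed

definition Mof :: "int \<Rightarrow> nat \<Rightarrow> int mat \<Rightarrow> int mat" where
  "Mof N g X = mat (2*g) (2*g) (\<lambda>(i,j). (X $$ (i,j) - (if i = j then 1 else 0)) div N)"

lemma Mof_dims[simp]: "dim_row (Mof N g X) = 2*g" "dim_col (Mof N g X) = 2*g"
  unfolding Mof_def by auto

lemma Mof_carrier[simp]: "Mof N g X \<in> carrier_mat (2*g) (2*g)"
  unfolding carrier_mat_def by simp

lemma Gamma_Sp: "X \<in> Gamma g N \<Longrightarrow> X \<in> Sp g"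
  unfolding Gamma_def by auto

lemma Gamma_dims: "X \<in> Gamma g N \<Longrightarrow> dim_row X = 2*g \<and> dim_col X = 2*g"
  using Sp_carrier[OF Gamma_Sp] by auto

lemma Gamma_decomp: assumes X: "X \<in> Gamma g N"
  shows "X = 1\<^sub>m (2*g) + N \<cdot>\<^sub>m Mof N g X"
proof (rule eq_matI)
  fix i j assume ij: "i < dim_row (1\<^sub>m (2*g) + N \<cdot>\<^sub>m Mof N g X)" "j < dim_col (1\<^sub>m (2*g) + N \<cdot>\<^sub>m Mof N g X)"
  then have i: "i < 2*g" and j: "j < 2*g" by auto
  have d: "dim_row X = 2*g" "dim_col X = 2*g" using Gamma_dims[OF X] by auto
  have "N dvd (X - 1\<^sub>m (2*g)) $$ (i,j)" using X i j unfolding Gamma_def by auto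
  then have dv: "N dvd X $$ (i,j) - (if i = j then 1 else 0)" using i j d by simp
  show "X $$ (i,j) = (1\<^sub>m (2*g) + N \<cdot>\<^sub>m Mof N g X) $$ (i,j)"
    using i j dv by (simp add: Mof_def)
qed (use Gamma_dims[OF X] in auto)

lemma Mof_form: assumes "C \<in> carrier_mat (2*g) (2*g)" "N \<noteq> 0"
  shows "Mof N g (1\<^sub>m (2*g) + N \<cdot>\<^sub>m C) = C"
  by (rule eq_matI) (use assms in \<open>auto simp: Mof_def\<close>)

lemma GammaI: assumes "X \<in> Sp g" "C \<in> carrier_mat (2*g) (2*g)" "X = 1\<^sub>m (2*g) + N \<cdot>\<^sub>m C"
  shows "X \<in> Gamma g N"
  unfolding Gamma_def using assms by auto

lemma one_plus_mult: fixes A B :: "int mat" assumes "A \<in> carrier_mat n n" "B \<in> carrier_mat n n"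
  shows "(1\<^sub>m n + N \<cdot>\<^sub>m A) * (1\<^sub>m n + N \<cdot>\<^sub>m B) = 1\<^sub>m n + N \<cdot>\<^sub>m (A + B + N \<cdot>\<^sub>m (A * B))"
proof -
  have d: "dim_row A = n" "dim_col A = n" "dim_row B = n" "dim_col B = n" using assms by auto
  have "(1\<^sub>m n + N \<cdot>\<^sub>m A) * (1\<^sub>m n + N \<cdot>\<^sub>m B) = (1\<^sub>m n + N \<cdot>\<^sub>m B) + N \<cdot>\<^sub>m A * (1\<^sub>m n + N \<cdot>\<^sub>m B)"
    using d by (simp add: mx_distr del: assoc_mult_mat)
  also have "N \<cdot>\<^sub>m A * (1\<^sub>m n + N \<cdot>\<^sub>m B) = N \<cdot>\<^sub>m A + N \<cdot>\<^sub>m (N \<cdot>\<^sub>m (A * B))"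
    using d by (simp add: mx_distl mx_smult_r mx_smult_l del: assoc_mult_mat)
  finally show ?thesis
    by (rule trans) (rule eq_matI, use d in \<open>simp_all add: algebra_simps\<close>)
qed

lemma conj_form: fixes A Y Yi :: "int mat" assumes "A \<in> carrier_mat n n" "Y \<in> carrier_mat n n" "Yi \<in> carrier_mat n n" "Y * Yi = 1\<^sub>m n"
  shows "Y * (1\<^sub>m n + N \<cdot>\<^sub>m A) * Yi = 1\<^sub>m n + N \<cdot>\<^sub>m (Y * A * Yi)"
proof -
  have d: "dim_row A = n" "dim_col A = n" "dim_row Y = n" "dim_col Y = n" "dim_row Yi = n" "dim_col Yi = n" using assms by auto
  have "Y * (1\<^sub>m n + N \<cdot>\<^sub>m A) * Yi = (Y + N \<cdot>\<^sub>m (Y * A)) * Yi"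
    using d by (simp add: mx_distl mx_smult_r del: assoc_mult_mat)
  also have "\<dots> = Y * Yi + N \<cdot>\<^sub>m (Y * A * Yi)"
    using d by (simp add: mx_distr mx_smult_l del: assoc_mult_mat)
  finally show ?thesis using assms(4) by simp
qed

lemma Gamma_one: "1\<^sub>m (2*g) \<in> Gamma g N"
  by (rule GammaI[OF Sp_one, of "0\<^sub>m (2*g) (2*g)"]) auto

lemma Gamma_mult_eq: assumes X: "X \<in> Gamma g N" and Y: "Y \<in> Gamma g N"
  shows "X * Y = 1\<^sub>m (2*g) + N \<cdot>\<^sub>m (Mof N g X + Mof N g Y + N \<cdot>\<^sub>m (Mof N g X * Mof N g Y))"
  using one_plus_mult[OF Mof_carrier[of N g X] Mof_carrier[of N g Y], of N] Gamma_decomp[OF X] Gamma_decomp[OF Y] by simp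

lemma Gamma_mult: assumes X: "X \<in> Gamma g N" and Y: "Y \<in> Gamma g N"
  shows "X * Y \<in> Gamma g N"
  by (rule GammaI[OF Sp_mult[OF Gamma_Sp[OF X] Gamma_Sp[OF Y]] _ Gamma_mult_eq[OF X Y]]) auto

lemma Mof_mult: assumes X: "X \<in> Gamma g N" and Y: "Y \<in> Gamma g N" and N: "N \<noteq> 0"
  shows "Mof N g (X * Y) = Mof N g X + Mof N g Y + N \<cdot>\<^sub>m (Mof N g X * Mof N g Y)"
  unfolding Gamma_mult_eq[OF X Y] by (rule Mof_form) (use N in auto)


declare assoc_mult_mat[simp del]
lemma Gamma_inv: assumes X: "X \<in> Gamma g N"
  shows "spinv g X \<in> Gamma g N"
    and "spinv g X = 1\<^sub>m (2*g) + N \<cdot>\<^sub>m (transpose_mat (Jmat g) * transpose_mat (Mof N g X) * Jmat g)"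
proof -
  define M where "M = Mof N g X"
  have dM: "dim_row M = 2*g" "dim_col M = 2*g" unfolding M_def by auto
  have "spinv g X = transpose_mat (Jmat g) * transpose_mat (1\<^sub>m (2*g) + N \<cdot>\<^sub>m M) * Jmat g"
    unfolding spinv_def M_def using Gamma_decomp[OF X] by simp
  also have "\<dots> = transpose_mat (Jmat g) * Jmat g + N \<cdot>\<^sub>m (transpose_mat (Jmat g) * transpose_mat M * Jmat g)"
    using dM by (simp add: mx_transpose_add mx_transpose_smult mx_distl mx_distr mx_smult_r mx_smult_l del: assoc_mult_mat)
  finally show e: "spinv g X = 1\<^sub>m (2*g) + N \<cdot>\<^sub>m (transpose_mat (Jmat g) * transpose_mat (Mof N g X) * Jmat g)"
    unfolding JT_J M_def .
  show "spinv g X \<in> Gamma g N"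
    by (rule GammaI[OF spinv_Sp[OF Gamma_Sp[OF X]] _ e]) (rule carrier_matI, simp_all)
qed

lemma Sp_inv_Sp: assumes Y: "Y \<in> Sp g" and Yi: "Yi \<in> carrier_mat (2*g) (2*g)" and YYi: "Y * Yi = 1\<^sub>m (2*g)"
  shows "Yi \<in> Sp g"
  using Sp_inv_unique[OF Y Yi YYi] spinv_Sp[OF Y] by simp

lemma Gamma_conj: assumes X: "X \<in> Gamma g N" and Y: "Y \<in> Sp g" and Yi: "Yi \<in> carrier_mat (2*g) (2*g)"
  and YYi: "Y * Yi = 1\<^sub>m (2*g)"
  shows "Y * X * Yi \<in> Gamma g N"
    and "Y * X * Yi = 1\<^sub>m (2*g) + N \<cdot>\<^sub>m (Y * Mof N g X * Yi)"
proof -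
  show e: "Y * X * Yi = 1\<^sub>m (2*g) + N \<cdot>\<^sub>m (Y * Mof N g X * Yi)"
    using conj_form[OF Mof_carrier[of N g X] Sp_carrier[OF Y] Yi YYi, where N=N] Gamma_decomp[OF X] by simp
  show "Y * X * Yi \<in> Gamma g N"
    by (rule GammaI[OF Sp_mult[OF Sp_mult[OF Y Gamma_Sp[OF X]] Sp_inv_Sp[OF Y Yi YYi]] _ e])
      (rule carrier_matI, use Yi Sp_carrier[OF Y] in simp_all)
qed

lemma bit_of_int: "(of_int k :: bit) = (if even k then 0 else 1)"
proof (cases "even k")
  case True
  then obtain j where "k = 2 * j" by blast
  then show ?thesis using True by simp
next
  case False
  then obtain j where "k = 2 * j + 1" using oddE by blast
  then show ?thesis using False by simp
qed

lemma bit_add_self[simp]: "(a::bit) + a = 0"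
  by (cases a) simp_all

lemma red2_dims[simp]: "dim_row (red2 A) = dim_row A" "dim_col (red2 A) = dim_col A"
  unfolding red2_def by auto

lemma red2_index[simp]: "i < dim_row A \<Longrightarrow> j < dim_col A \<Longrightarrow> red2 A $$ (i,j) = of_int (A $$ (i,j))"
  unfolding red2_def by auto

lemma red2_add: "dim_row A = dim_row B \<Longrightarrow> dim_col A = dim_col B \<Longrightarrow> red2 (A + B) = red2 A + red2 B"
  by (rule eq_matI) auto

lemma red2_mult: assumes "dim_col A = dim_row B" shows "red2 (A * B) = red2 A * red2 B"
proof -
  have c: "A \<in> carrier_mat (dim_row A) (dim_col A)" "B \<in> carrier_mat (dim_col A) (dim_col B)"
    using assms by (auto intro!: carrier_matI)
  show ?thesis unfolding red2_def by (rule of_int_hom.mat_hom_mult[OF c])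
qed

lemma red2_smult_even: "even N \<Longrightarrow> red2 (N \<cdot>\<^sub>m A) = 0\<^sub>m (dim_row A) (dim_col A)"
  by (rule eq_matI) (auto simp: bit_of_int)

lemma red2_one[simp]: "red2 (1\<^sub>m n) = 1\<^sub>m n"
  by (rule eq_matI) auto

lemma red2_transpose: "red2 (transpose_mat A) = transpose_mat (red2 A)"
  by (rule eq_matI) auto

lemma red2_uminus: "red2 (- A) = red2 A"
  by (rule eq_matI) auto

lemma red2_JT: "red2 (transpose_mat (Jmat g)) = red2 (Jmat g)"
  unfolding J_transpose red2_uminus ..

lemma red2_JT': "transpose_mat (red2 (Jmat g)) = red2 (Jmat g)"
  using red2_JT[of g] red2_transpose[of "Jmat g"] by simp

lemma red2_JJ: "red2 (Jmat g) * red2 (Jmat g) = 1\<^sub>m (2*g)"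
  using red2_mult[of "Jmat g" "Jmat g"] J_J[of g] red2_uminus[of "1\<^sub>m (2*g)"] by simp

definition F2 :: "int \<Rightarrow> nat \<Rightarrow> int mat \<Rightarrow> bit mat" where
  "F2 N g X = red2 (Mof N g X * Jmat g)"

definition F1 :: "int \<Rightarrow> nat \<Rightarrow> int mat \<Rightarrow> bit vec" where
  "F1 N g X = vec (2*g) (\<lambda>k. F2 N g X $$ (k,k))"

lemma F2_dims[simp]: "dim_row (F2 N g X) = 2*g" "dim_col (F2 N g X) = 2*g"
  unfolding F2_def by auto

lemma F2_carrier[simp]: "F2 N g X \<in> carrier_mat (2*g) (2*g)"
  unfolding carrier_mat_def by simp

lemma F1_carrier[simp]: "F1 N g X \<in> carrier_vec (2*g)"
  unfolding F1_def by simp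

lemma F2_mult: assumes X: "X \<in> Gamma g N" and Y: "Y \<in> Gamma g N" and N: "N \<noteq> 0" "even N"
  shows "F2 N g (X * Y) = F2 N g X + F2 N g Y"
proof -
  define A where "A = Mof N g X"
  define B where "B = Mof N g Y"
  have d: "dim_row A = 2*g" "dim_col A = 2*g" "dim_row B = 2*g" "dim_col B = 2*g"
    unfolding A_def B_def by auto
  have "F2 N g (X * Y) = red2 ((A + B + N \<cdot>\<^sub>m (A * B)) * Jmat g)"
    unfolding F2_def Mof_mult[OF X Y N(1)] A_def B_def ..
  also have "\<dots> = red2 (A + B + N \<cdot>\<^sub>m (A * B)) * red2 (Jmat g)"
    by (rule red2_mult) (simp add: d)
  also have "red2 (A + B + N \<cdot>\<^sub>m (A * B)) = red2 (A + B) + red2 (N \<cdot>\<^sub>m (A * B))"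
    by (rule red2_add) (simp_all add: d)
  also have "red2 (A + B) = red2 A + red2 B"
    by (rule red2_add) (simp_all add: d)
  also have "red2 (N \<cdot>\<^sub>m (A * B)) = 0\<^sub>m (2*g) (2*g)"
    using red2_smult_even[OF N(2), of "A * B"] d by simp
  also have "red2 A + red2 B + 0\<^sub>m (2*g) (2*g) = red2 A + red2 B"
    by (rule right_add_zero_mat) (rule carrier_matI, use d in simp_all)
  also have "(red2 A + red2 B) * red2 (Jmat g) = red2 A * red2 (Jmat g) + red2 B * red2 (Jmat g)"
    by (rule mx_distr) (simp_all add: d)
  also have "red2 A * red2 (Jmat g) + red2 B * red2 (Jmat g) = F2 N g X + F2 N g Y"
    unfolding F2_def A_def B_def by (simp add: red2_mult)
  finally show ?thesis .
qed

lemma F1_mult: assumes X: "X \<in> Gamma g N" and Y: "Y \<in> Gamma g N" and N: "N \<noteq> 0" "even N"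
  shows "F1 N g (X * Y) = F1 N g X + F1 N g Y"
  unfolding F1_def F2_mult[OF X Y N] by (rule eq_vecI) auto

lemma spinv_J: assumes Y: "Y \<in> Sp g" shows "red2 (spinv g Y * Jmat g) = red2 (Jmat g) * transpose_mat (red2 Y)"
proof -
  have dY: "dim_row Y = 2*g" "dim_col Y = 2*g" using Sp_carrier[OF Y] by auto
  have "red2 (spinv g Y * Jmat g) = red2 (transpose_mat (Jmat g) * transpose_mat Y * Jmat g) * red2 (Jmat g)"
    unfolding spinv_def by (rule red2_mult) (simp add: dY)
  also have "red2 (transpose_mat (Jmat g) * transpose_mat Y * Jmat g) = red2 (transpose_mat (Jmat g) * transpose_mat Y) * red2 (Jmat g)"
    by (rule red2_mult) (simp add: dY)
  also have "red2 (transpose_mat (Jmat g) * transpose_mat Y) = red2 (transpose_mat (Jmat g)) * red2 (transpose_mat Y)"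
    by (rule red2_mult) (simp add: dY)
  also have "red2 (transpose_mat (Jmat g)) * red2 (transpose_mat Y) = red2 (Jmat g) * transpose_mat (red2 Y)"
    by (simp only: red2_JT' red2_transpose)
  also have "red2 (Jmat g) * transpose_mat (red2 Y) * red2 (Jmat g) * red2 (Jmat g)
     = red2 (Jmat g) * transpose_mat (red2 Y) * (red2 (Jmat g) * red2 (Jmat g))"
    by (rule mx_assoc) (simp_all add: dY)
  also have "\<dots> = red2 (Jmat g) * transpose_mat (red2 Y)"
    unfolding red2_JJ by (rule right_mult_one_mat') (simp add: dY)
  finally show ?thesis .
qed

lemma F2_conj: assumes X: "X \<in> Gamma g N" and Y: "Y \<in> Sp g" and Yi: "Yi \<in> carrier_mat (2*g) (2*g)"
  and YYi: "Y * Yi = 1\<^sub>m (2*g)" and N: "N \<noteq> 0"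
  shows "F2 N g (Y * X * Yi) = red2 Y * F2 N g X * transpose_mat (red2 Y)"
proof -
  have dY: "dim_row Y = 2*g" "dim_col Y = 2*g" using Sp_carrier[OF Y] by auto
  have Yi': "Yi = spinv g Y" by (rule Sp_inv_unique[OF Y Yi YYi])
  define M where "M = Mof N g X"
  have dM: "dim_row M = 2*g" "dim_col M = 2*g" unfolding M_def by auto
  have "Mof N g (Y * X * Yi) = Y * M * Yi"
    unfolding Gamma_conj(2)[OF X Y Yi YYi] M_def by (rule Mof_form) (rule carrier_matI, use Yi dY N in simp_all)
  then have "F2 N g (Y * X * Yi) = red2 (Y * M * Yi * Jmat g)"
    unfolding F2_def by simp
  also have "Y * M * Yi * Jmat g = (Y * M) * (spinv g Y * Jmat g)"
    unfolding Yi' by (rule mx_assoc) (use spinv_carrier[OF Y] dY dM in auto)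
  also have "red2 ((Y * M) * (spinv g Y * Jmat g)) = red2 (Y * M) * red2 (spinv g Y * Jmat g)"
    by (rule red2_mult) (use spinv_carrier[OF Y] dY dM in auto)
  also have "red2 (Y * M) = red2 Y * red2 M"
    by (rule red2_mult) (use dY dM in auto)
  also have "red2 Y * red2 M * red2 (spinv g Y * Jmat g) = red2 Y * (red2 M * red2 (Jmat g)) * transpose_mat (red2 Y)"
    unfolding spinv_J[OF Y] using dY dM by (simp add: mx_assoc)
  also have "red2 M * red2 (Jmat g) = F2 N g X"
    unfolding F2_def M_def by (rule red2_mult[symmetric]) simp
  finally show ?thesis .
qed


declare assoc_mult_mat[simp del]
declare add_bit_eq_xor[simp del] mult_bit_eq_and[simp del]

lemma bit_add_self2[simp]: "(a::bit) + (a + b) = b"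
  by (metis add.assoc add.left_neutral bit_add_self)

lemma XJXT_form: fixes M :: "int mat" assumes dM: "dim_row M = 2*g" "dim_col M = 2*g"
  shows "(1\<^sub>m (2*g) + N \<cdot>\<^sub>m M) * Jmat g * transpose_mat (1\<^sub>m (2*g) + N \<cdot>\<^sub>m M)
    = Jmat g + N \<cdot>\<^sub>m (M * Jmat g) + N \<cdot>\<^sub>m (Jmat g * transpose_mat M) + N \<cdot>\<^sub>m (N \<cdot>\<^sub>m (M * Jmat g * transpose_mat M))"
proof -
  have t: "transpose_mat (1\<^sub>m (2*g) + N \<cdot>\<^sub>m M) = 1\<^sub>m (2*g) + N \<cdot>\<^sub>m transpose_mat M"
    by (rule eq_matI) (use dM in auto)
  have a: "(1\<^sub>m (2*g) + N \<cdot>\<^sub>m M) * Jmat g = Jmat g + N \<cdot>\<^sub>m (M * Jmat g)"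
    by (subst mx_distr) (simp_all add: dM mx_smult_l)
  have b: "(Jmat g + N \<cdot>\<^sub>m (M * Jmat g)) * (1\<^sub>m (2*g) + N \<cdot>\<^sub>m transpose_mat M)
     = Jmat g + N \<cdot>\<^sub>m (M * Jmat g) + N \<cdot>\<^sub>m (Jmat g * transpose_mat M + N \<cdot>\<^sub>m (M * Jmat g * transpose_mat M))"
    by (simp add: dM mx_distr mx_distl mx_smult_l mx_smult_r)
  show ?thesis unfolding t a b
    by (rule eq_matI) (simp_all add: dM algebra_simps)
qed

lemma F2_sym: assumes X: "X \<in> Gamma g N" and N: "N \<noteq> 0" "even N"
  shows "transpose_mat (F2 N g X) = F2 N g X"
proof (rule eq_matI)
  define M where "M = Mof N g X"
  have dM: "dim_row M = 2*g" "dim_col M = 2*g" unfolding M_def by auto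
  have e: "Jmat g + N \<cdot>\<^sub>m (M * Jmat g) + N \<cdot>\<^sub>m (Jmat g * transpose_mat M) + N \<cdot>\<^sub>m (N \<cdot>\<^sub>m (M * Jmat g * transpose_mat M)) = Jmat g"
    using Sp_eq2[OF Gamma_Sp[OF X]] XJXT_form[OF dM, of N] Gamma_decomp[OF X] unfolding M_def by simp
  have JMT: "Jmat g * transpose_mat M = - transpose_mat (M * Jmat g)"
  proof -
    have "transpose_mat (M * Jmat g) = transpose_mat (Jmat g) * transpose_mat M"
      by (rule mx_transpose_mult) (simp add: dM)
    also have "\<dots> = - (Jmat g * transpose_mat M)"
      unfolding J_transpose by (rule uminus_mult_left_mat) (simp add: dM)
    finally show ?thesis by simp
  qed
  fix i j assume ij: "i < dim_row (F2 N g X)" "j < dim_col (F2 N g X)"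
  then have i: "i < 2*g" and j: "j < 2*g" by auto
  from arg_cong[OF e, of "\<lambda>A. A $$ (i,j)"]
  have "N * ((M * Jmat g) $$ (i,j) + (Jmat g * transpose_mat M) $$ (i,j) + N * (M * Jmat g * transpose_mat M) $$ (i,j)) = 0"
    using i j dM by (simp add: algebra_simps)
  then have "(M * Jmat g) $$ (i,j) + (Jmat g * transpose_mat M) $$ (i,j) + N * (M * Jmat g * transpose_mat M) $$ (i,j) = 0"
    using N by simp
  moreover have "(Jmat g * transpose_mat M) $$ (i,j) = - (M * Jmat g) $$ (j,i)"
    unfolding JMT using i j dM by simp
  ultimately have "(M * Jmat g) $$ (i,j) - (M * Jmat g) $$ (j,i) = - N * (M * Jmat g * transpose_mat M) $$ (i,j)"
    by simp
  then have "even ((M * Jmat g) $$ (i,j) - (M * Jmat g) $$ (j,i))"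
    using N(2) by (metis dvd_mult2 even_minus)
  then have "even ((M * Jmat g) $$ (i,j)) = even ((M * Jmat g) $$ (j,i))"
    by simp
  then show "transpose_mat (F2 N g X) $$ (i, j) = F2 N g X $$ (i, j)"
    unfolding F2_def M_def[symmetric] using i j dM by (simp add: bit_of_int)
qed auto

lemma bit_symsum:
  fixes f :: "nat \<Rightarrow> nat \<Rightarrow> bit"
  assumes "\<And>j k. f j k = f k j"
  shows "(\<Sum>k<n. \<Sum>j<n. f j k) = (\<Sum>j<n. f j j)"
proof (induction n)
  case 0 then show ?case by simp
next
  case (Suc n)
  have s1: "(\<Sum>k<Suc n. \<Sum>j<Suc n. f j k) = (\<Sum>k<n. \<Sum>j<n. f j k) + ((\<Sum>k<n. f n k) + ((\<Sum>j<n. f j n) + f n n))"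
    by (simp add: sum.distrib ac_simps)
  have s2: "(\<Sum>k<n. f n k) = (\<Sum>j<n. f j n)"
    using assms by simp
  show ?case unfolding s1 s2 Suc.IH by simp
qed

lemma diag_conj: fixes R T :: "bit mat"
  assumes R: "R \<in> carrier_mat n n" and T: "T \<in> carrier_mat n n" and sym: "transpose_mat T = T" and i: "i < n"
  shows "(R * T * transpose_mat R) $$ (i,i) = (\<Sum>j<n. R $$ (i,j) * T $$ (j,j))"
proof -
  have Tsym: "T $$ (k,j) = T $$ (j,k)" if "j < n" "k < n" for j k
    using arg_cong[OF sym, of "\<lambda>A. A $$ (j,k)"] that T by auto
  have "(R * T * transpose_mat R) $$ (i,i) = (\<Sum>k<n. (\<Sum>j<n. R $$ (i,j) * T $$ (j,k)) * R $$ (i,k))"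
    using R T i by (simp add: scalar_prod_def lessThan_atLeast0)
  also have "\<dots> = (\<Sum>k<n. \<Sum>j<n. R $$ (i,j) * (if j < n \<and> k < n then T $$ (j,k) else 0) * R $$ (i,k))"
    by (simp add: sum_distrib_right)
  also have "\<dots> = (\<Sum>j<n. R $$ (i,j) * (if j < n \<and> j < n then T $$ (j,j) else 0) * R $$ (i,j))"
    by (rule bit_symsum) (auto simp: Tsym mult.commute mult.left_commute)
  also have "\<dots> = (\<Sum>j<n. R $$ (i,j) * T $$ (j,j))"
    by (rule sum.cong) (auto simp: mult.commute mult.left_commute)
  finally show ?thesis .
qed

lemma F1_conj: assumes X: "X \<in> Gamma g N" and Y: "Y \<in> Sp g" and Yi: "Yi \<in> carrier_mat (2*g) (2*g)"
  and YYi: "Y * Yi = 1\<^sub>m (2*g)" and N: "N \<noteq> 0" "even N"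
  shows "F1 N g (Y * X * Yi) = red2 Y *\<^sub>v F1 N g X"
proof (rule eq_vecI)
  have cR: "red2 Y \<in> carrier_mat (2*g) (2*g)" using Sp_carrier[OF Y] by (auto intro!: carrier_matI)
  fix i assume "i < dim_vec (red2 Y *\<^sub>v F1 N g X)"
  then have i: "i < 2*g" using Sp_carrier[OF Y] by auto
  have "F1 N g (Y * X * Yi) $ i = (red2 Y * F2 N g X * transpose_mat (red2 Y)) $$ (i,i)"
    unfolding F1_def F2_conj[OF X Y Yi YYi N(1)] using i by simp
  also have "\<dots> = (\<Sum>j<2*g. red2 Y $$ (i,j) * F2 N g X $$ (j,j))"
    by (rule diag_conj[OF cR F2_carrier F2_sym[OF X N] i])
  also have "\<dots> = (red2 Y *\<^sub>v F1 N g X) $ i"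
    using i Sp_carrier[OF Y] by (simp add: F1_def scalar_prod_def lessThan_atLeast0)
  finally show "F1 N g (Y * X * Yi) $ i = (red2 Y *\<^sub>v F1 N g X) $ i" .
qed (use Sp_carrier[OF Y] in \<open>simp add: F1_def\<close>)


declare assoc_mult_mat[simp del]
declare add_bit_eq_xor[simp del] mult_bit_eq_and[simp del]

lemma MJ_index: fixes M :: "int mat" assumes dM: "dim_row M = 2*g" "dim_col M = 2*g" and i: "i < 2*g" and j: "j < 2*g"
  shows "(M * Jmat g) $$ (i,j) = (if j < g then - M $$ (i, j+g) else M $$ (i, j-g))"
proof -
  have "(M * Jmat g) $$ (i,j) = (\<Sum>k\<in>{0..<2*g}. M $$ (i,k) * Jmat g $$ (k,j))"
    using dM i j by (simp add: scalar_prod_def)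
  also have "\<dots> = (\<Sum>k\<in>{0..<2*g}. if k = (if j < g then j+g else j-g) then (if j < g then - M $$ (i, j+g) else M $$ (i, j-g)) else 0)"
    by (rule sum.cong) (use j in \<open>auto simp: J_index\<close>)
  also have "\<dots> = (if j < g then - M $$ (i, j+g) else M $$ (i, j-g))"
    using j by (auto simp: sum.delta')
  finally show ?thesis .
qed

lemma Igusa_sums: assumes d: "dim_row X = 2*g" "dim_col X = 2*g"
  shows "X \<in> Igusa g N \<longleftrightarrow> X \<in> Gamma g N \<and>
     (\<forall>i<g. 2*N dvd (\<Sum>k<g. X $$ (i,k) * X $$ (i,k+g))) \<and>
     (\<forall>i<g. 2*N dvd (\<Sum>k<g. X $$ (i+g,k) * X $$ (i+g,k+g)))"
  using d by (simp add: Igusa_def split_block_def Let_def scalar_prod_def lessThan_atLeast0)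

lemma sum_delta_lin: fixes a b :: "nat \<Rightarrow> int" assumes i: "i < g"
  shows "(\<Sum>k<g. ((if i = k then 1 else 0) + N * a k) * (N * b k)) = N * b i + N * N * (\<Sum>k<g. a k * b k)"
proof -
  have "(\<Sum>k<g. ((if i = k then 1 else 0) + N * a k) * (N * b k)) = (\<Sum>k<g. (if i = k then N * b k else 0) + N * N * (a k * b k))"
    by (rule sum.cong) (auto simp: algebra_simps)
  also have "\<dots> = (\<Sum>k<g. (if i = k then N * b k else 0)) + (\<Sum>k<g. N * N * (a k * b k))"
    by (rule sum.distrib)
  also have "\<dots> = N * b i + N * N * (\<Sum>k<g. a k * b k)"
    using i by (simp add: sum_distrib_left)
  finally show ?thesis .
qed

lemma dvd_2N: fixes N x c :: int assumes "N \<noteq> 0" "even N"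
  shows "2 * N dvd N * x + N * N * c \<longleftrightarrow> even x"
proof -
  have "N * x + N * N * c = N * (x + N * c)" by (simp add: algebra_simps)
  then have "2 * N dvd N * x + N * N * c \<longleftrightarrow> 2 dvd x + N * c"
    using assms(1) by (simp add: mult.commute[of 2 N])
  also have "\<dots> \<longleftrightarrow> even x" using assms(2) by auto
  finally show ?thesis .
qed

lemma Igusa_char: assumes X: "X \<in> Gamma g N" and N: "N \<noteq> 0" "even N"
  shows "X \<in> Igusa g N \<longleftrightarrow> F1 N g X = 0\<^sub>v (2*g)"
proof -
  define M where "M = Mof N g X"
  have dM: "dim_row M = 2*g" "dim_col M = 2*g" unfolding M_def by auto
  have d: "dim_row X = 2*g" "dim_col X = 2*g" using Gamma_dims[OF X] by auto
  have Xe: "X $$ (i,k) = (if i = k then 1 else 0) + N * M $$ (i,k)" if "i < 2*g" "k < 2*g" for i k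
    using arg_cong[OF Gamma_decomp[OF X], of "\<lambda>A. A $$ (i,k)"] that unfolding M_def by simp
  have S1: "2*N dvd (\<Sum>k<g. X $$ (i,k) * X $$ (i,k+g)) \<longleftrightarrow> even (M $$ (i, i+g))" if i: "i < g" for i
  proof -
    have "(\<Sum>k<g. X $$ (i,k) * X $$ (i,k+g)) = (\<Sum>k<g. ((if i = k then 1 else 0) + N * M $$ (i,k)) * (N * M $$ (i,k+g)))"
      by (rule sum.cong) (use i in \<open>auto simp: Xe\<close>)
    also have "\<dots> = N * M $$ (i,i+g) + N * N * (\<Sum>k<g. M $$ (i,k) * M $$ (i,k+g))"
      by (rule sum_delta_lin[OF i])
    finally show ?thesis using dvd_2N[OF N] by simp
  qed
  have S2: "2*N dvd (\<Sum>k<g. X $$ (i+g,k) * X $$ (i+g,k+g)) \<longleftrightarrow> even (M $$ (i+g, i))" if i: "i < g" for i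
  proof -
    have "(\<Sum>k<g. X $$ (i+g,k) * X $$ (i+g,k+g)) = (\<Sum>k<g. ((if i = k then 1 else 0) + N * M $$ (i+g,k+g)) * (N * M $$ (i+g,k)))"
      by (rule sum.cong) (use i in \<open>auto simp: Xe\<close>)
    also have "\<dots> = N * M $$ (i+g,i) + N * N * (\<Sum>k<g. M $$ (i+g,k+g) * M $$ (i+g,k))"
      by (rule sum_delta_lin[OF i])
    finally show ?thesis using dvd_2N[OF N] by simp
  qed
  have F1k: "F1 N g X $ k = of_int ((M * Jmat g) $$ (k,k))" if "k < 2*g" for k
    unfolding F1_def F2_def M_def using that by simp
  have F0: "F1 N g X = 0\<^sub>v (2*g) \<longleftrightarrow> (\<forall>k<2*g. F1 N g X $ k = 0)"
    unfolding vec_eq_iff by (simp add: F1_def)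
  have F: "F1 N g X = 0\<^sub>v (2*g) \<longleftrightarrow> (\<forall>k<2*g. even ((M * Jmat g) $$ (k,k)))"
    unfolding F0 using F1k by (simp add: bit_of_int) blast
  have G: "(\<forall>k<2*g. even ((M * Jmat g) $$ (k,k))) \<longleftrightarrow> (\<forall>i<g. even (M $$ (i,i+g))) \<and> (\<forall>i<g. even (M $$ (i+g,i)))"
  proof
    assume a: "\<forall>k<2*g. even ((M * Jmat g) $$ (k,k))"
    show "(\<forall>i<g. even (M $$ (i,i+g))) \<and> (\<forall>i<g. even (M $$ (i+g,i)))"
    proof (intro conjI allI impI)
      fix i assume i: "i < g"
      show "even (M $$ (i,i+g))" using a[rule_format, of i] i MJ_index[OF dM, of i i] by simp
      show "even (M $$ (i+g,i))" using a[rule_format, of "i+g"] i MJ_index[OF dM, of "i+g" "i+g"] by simp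
    qed
  next
    assume a: "(\<forall>i<g. even (M $$ (i,i+g))) \<and> (\<forall>i<g. even (M $$ (i+g,i)))"
    show "\<forall>k<2*g. even ((M * Jmat g) $$ (k,k))"
    proof (intro allI impI)
      fix k assume k: "k < 2*g"
      show "even ((M * Jmat g) $$ (k,k))"
      proof (cases "k < g")
        case True then show ?thesis using a MJ_index[OF dM k k] by simp
      next
        case False
        define i where "i = k - g"
        have ki: "k = i + g" "i < g" using k False unfolding i_def by auto
        have "even (M $$ (i+g, i))" using a ki(2) by blast
        then show ?thesis using MJ_index[OF dM k k] False ki by simp
      qed
    qed
  qed
  show ?thesis unfolding Igusa_sums[OF d] F G using X S1 S2 by auto
qed


declare assoc_mult_mat[simp del]
declare add_bit_eq_xor[simp del] mult_bit_eq_and[simp del]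

definition Alt :: "nat \<Rightarrow> bit mat set" where
  "Alt n = {A \<in> carrier_mat n n. transpose_mat A = A \<and> (\<forall>i<n. A $$ (i,i) = 0)}"

lemma tens_index[simp]: "i < dim_vec u \<Longrightarrow> j < dim_vec v \<Longrightarrow> tens u v $$ (i,j) = u $ i * v $ j"
  unfolding tens_def by simp

lemma tens_dims[simp]: "dim_row (tens u v) = dim_vec u" "dim_col (tens u v) = dim_vec v"
  unfolding tens_def by simp_all

lemma AltI: assumes "dim_row A = n" "dim_col A = n" "\<And>i j. i < n \<Longrightarrow> j < n \<Longrightarrow> A $$ (j,i) = A $$ (i,j)"
  "\<And>i. i < n \<Longrightarrow> A $$ (i,i) = 0" shows "A \<in> Alt n"
proof -
  have "transpose_mat A = A" by (rule eq_matI) (use assms in auto)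
  then show ?thesis unfolding Alt_def using assms by (auto intro!: carrier_matI)
qed

lemma AltD: assumes "A \<in> Alt n"
  shows "dim_row A = n" "dim_col A = n" "\<And>i j. i < n \<Longrightarrow> j < n \<Longrightarrow> A $$ (j,i) = A $$ (i,j)"
    "\<And>i. i < n \<Longrightarrow> A $$ (i,i) = 0"
proof -
  show d: "dim_row A = n" "dim_col A = n" using assms unfolding Alt_def by auto
  show "A $$ (j,i) = A $$ (i,j)" if "i < n" "j < n" for i j
  proof -
    have "transpose_mat A = A" using assms unfolding Alt_def by auto
    from arg_cong[OF this, of "\<lambda>B. B $$ (i,j)"] show ?thesis using that d by simp
  qed
  show "\<And>i. i < n \<Longrightarrow> A $$ (i,i) = 0" using assms unfolding Alt_def by auto
qed

lemma Lambda2_Alt: "M \<in> Lambda2 g \<Longrightarrow> M \<in> Alt (2*g)"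
proof (induction rule: Lambda2.induct)
  case zero then show ?case by (rule AltI) auto
next
  case (add M u u')
  note A = AltD[OF add.IH]
  show ?case
  proof (rule AltI)
    fix i j assume "i < 2*g" "j < 2*g"
    then show "(M + (tens u u' + tens u' u)) $$ (j, i) = (M + (tens u u' + tens u' u)) $$ (i, j)"
      using add.hyps A by (simp add: algebra_simps)
  next
    fix i assume "i < 2*g"
    then show "(M + (tens u u' + tens u' u)) $$ (i, i) = 0"
      using add.hyps A by (simp add: mult.commute)
  qed (use add.hyps A in auto)
qed

definition lv :: "nat \<Rightarrow> bit mat \<Rightarrow> nat \<Rightarrow> bit vec" where
  "lv n A r = vec n (\<lambda>j. if j < r then A $$ (r,j) else 0)"

primrec Bsum :: "nat \<Rightarrow> bit mat \<Rightarrow> nat \<Rightarrow> bit mat" where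
  "Bsum n A 0 = 0\<^sub>m n n"
| "Bsum n A (Suc r) = Bsum n A r + (tens (unit_vec n r) (lv n A r) + tens (lv n A r) (unit_vec n r))"

lemma Bsum_dims[simp]: "dim_row (Bsum n A r) = n" "dim_col (Bsum n A r) = n"
  by (induction r) (simp_all add: lv_def)

lemma Bsum_Lambda2: "r \<le> 2*g \<Longrightarrow> Bsum (2*g) A r \<in> Lambda2 g"
proof (induction r)
  case 0 then show ?case by (simp add: Lambda2.zero)
next
  case (Suc r) then show ?case by (simp add: Lambda2.add lv_def)
qed

lemma Bsum_index: "a < n \<Longrightarrow> b < n \<Longrightarrow> r \<le> n \<Longrightarrow> Bsum n A r $$ (a,b) =
   (if a < r \<and> b < a then A $$ (a,b) else 0) + (if b < r \<and> a < b then A $$ (b,a) else 0)"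
proof (induction r)
  case 0 then show ?case by simp
next
  case (Suc r)
  then show ?case by (auto simp: lv_def less_Suc_eq)
qed

lemma Alt_Lambda2: assumes A: "A \<in> Alt (2*g)" shows "A \<in> Lambda2 g"
proof -
  note a = AltD[OF A]
  have "Bsum (2*g) A (2*g) = A"
  proof (rule eq_matI)
    fix i j assume "i < dim_row A" "j < dim_col A"
    then have i: "i < 2*g" and j: "j < 2*g" using a by auto
    show "Bsum (2*g) A (2*g) $$ (i,j) = A $$ (i,j)"
      unfolding Bsum_index[OF i j order.refl] using i j a(3)[OF j i] a(4)[OF i]
      by (cases "i < j"; cases "j < i") auto
  qed (use a in auto)
  then show ?thesis using Bsum_Lambda2[of "2*g" g A] by simp
qed

lemma Lambda2_eq: "Lambda2 g = Alt (2*g)"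
  using Lambda2_Alt Alt_Lambda2 by blast


declare assoc_mult_mat[simp del]
declare add_bit_eq_xor[simp del] mult_bit_eq_and[simp del]

definition Pm :: "int vec \<Rightarrow> int mat" where
  "Pm v = mat (dim_vec v) (dim_vec v) (\<lambda>(i,j). v $ i * v $ j)"

definition Tv :: "int \<Rightarrow> nat \<Rightarrow> int vec \<Rightarrow> int mat" where
  "Tv N g v = 1\<^sub>m (2*g) + N \<cdot>\<^sub>m (Pm v * Jmat g)"

lemma Pm_dims[simp]: "dim_row (Pm v) = dim_vec v" "dim_col (Pm v) = dim_vec v"
  unfolding Pm_def by simp_all

lemma Pm_index[simp]: "i < dim_vec v \<Longrightarrow> j < dim_vec v \<Longrightarrow> Pm v $$ (i,j) = v $ i * v $ j"
  unfolding Pm_def by simp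

lemma J_anti: "k < 2*g \<Longrightarrow> l < 2*g \<Longrightarrow> Jmat g $$ (l,k) = - Jmat g $$ (k,l)"
  by (auto simp: J_index)

lemma vJv: assumes v: "dim_vec v = 2*g"
  shows "(\<Sum>l<2*g. \<Sum>k<2*g. v $ k * Jmat g $$ (k,l) * v $ l) = 0"
proof -
  define S where "S = (\<Sum>l<2*g. \<Sum>k<2*g. v $ k * Jmat g $$ (k,l) * v $ l)"
  have "S = (\<Sum>k<2*g. \<Sum>l<2*g. v $ k * Jmat g $$ (k,l) * v $ l)"
    unfolding S_def by (rule sum.swap)
  also have "\<dots> = (\<Sum>k<2*g. \<Sum>l<2*g. - (v $ l * Jmat g $$ (l,k) * v $ k))"
    by (intro sum.cong refl) (auto simp: J_index)
  also have "\<dots> = - S" unfolding S_def by (simp add: sum_negf)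
  finally have "S = - S" .
  then show ?thesis unfolding S_def by simp
qed

lemma PJP: assumes v: "dim_vec v = 2*g" shows "Pm v * Jmat g * Pm v = 0\<^sub>m (2*g) (2*g)"
proof (rule eq_matI)
  fix a b assume ab: "a < dim_row (0\<^sub>m (2 * g) (2 * g) :: int mat)" "b < dim_col (0\<^sub>m (2 * g) (2 * g) :: int mat)"
  then have a: "a < 2*g" and b: "b < 2*g" by auto
  have "(Pm v * Jmat g * Pm v) $$ (a,b) = (\<Sum>l<2*g. (\<Sum>k<2*g. v $ a * v $ k * Jmat g $$ (k,l)) * (v $ l * v $ b))"
    using a b v by (simp add: scalar_prod_def lessThan_atLeast0)
  also have "\<dots> = v $ a * v $ b * (\<Sum>l<2*g. \<Sum>k<2*g. v $ k * Jmat g $$ (k,l) * v $ l)"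
    by (simp add: sum_distrib_left sum_distrib_right algebra_simps)
  also have "\<dots> = 0" using vJv[OF v] by simp
  finally show "(Pm v * Jmat g * Pm v) $$ (a,b) = 0\<^sub>m (2 * g) (2 * g) $$ (a,b)" using a b by simp
qed (use v in auto)

lemma Pm_T: "transpose_mat (Pm v) = Pm v"
  by (rule eq_matI) auto

lemma Tv_Sp: assumes v: "dim_vec v = 2*g" shows "Tv N g v \<in> Sp g"
proof -
  define P where "P = Pm v"
  define J where "J = Jmat g"
  have dP: "dim_row P = 2*g" "dim_col P = 2*g" unfolding P_def using v by auto
  have dJ: "dim_row J = 2*g" "dim_col J = 2*g" unfolding J_def by auto
  have tr: "transpose_mat (Tv N g v) = 1\<^sub>m (2*g) + N \<cdot>\<^sub>m (transpose_mat J * P)"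
    unfolding Tv_def P_def[symmetric] J_def[symmetric]
    using dP dJ by (simp add: mx_transpose_add mx_transpose_mult mx_transpose_smult Pm_T P_def)
  have s1: "(1\<^sub>m (2*g) + N \<cdot>\<^sub>m (transpose_mat J * P)) * J = J + N \<cdot>\<^sub>m (transpose_mat J * P * J)"
    using dP dJ by (simp add: mx_distr mx_smult_l)
  have s2: "(J + N \<cdot>\<^sub>m (transpose_mat J * P * J)) * (1\<^sub>m (2*g) + N \<cdot>\<^sub>m (P * J))
     = J + N \<cdot>\<^sub>m (transpose_mat J * P * J) + N \<cdot>\<^sub>m (J * (P * J) + N \<cdot>\<^sub>m (transpose_mat J * P * J * (P * J)))"
    using dP dJ by (simp add: mx_distr mx_distl mx_smult_l mx_smult_r)
  have z: "transpose_mat J * P * J * (P * J) = 0\<^sub>m (2*g) (2*g)"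
  proof -
    have "transpose_mat J * P * J * (P * J) = transpose_mat J * (P * J * P) * J"
      using dP dJ by (simp add: mx_assoc)
    also have "P * J * P = 0\<^sub>m (2*g) (2*g)" unfolding P_def J_def by (rule PJP[OF v])
    finally show ?thesis using dJ by simp
  qed
  have m: "transpose_mat J * P * J = - (J * (P * J))"
    unfolding J_def J_transpose using dP by (simp add: mx_assoc)
  have "transpose_mat (Tv N g v) * Jmat g * Tv N g v = J"
    unfolding tr J_def[symmetric] s1 unfolding Tv_def J_def[symmetric] P_def[symmetric] unfolding s2 unfolding z unfolding m
    by (rule eq_matI) (use dP dJ in \<open>simp_all add: algebra_simps\<close>)
  then show ?thesis unfolding Sp_def J_def Tv_def using v by (auto intro!: carrier_matI)
qed

lemma Tv_Gamma: assumes v: "dim_vec v = 2*g" shows "Tv N g v \<in> Gamma g N"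
  by (rule GammaI[OF Tv_Sp[OF v], of "Pm v * Jmat g"]) (use v in \<open>auto simp: Tv_def intro!: carrier_matI\<close>)

definition lift :: "bit vec \<Rightarrow> int vec" where
  "lift u = vec (dim_vec u) (\<lambda>i. if u $ i = 1 then 1 else 0)"

lemma lift_dim[simp]: "dim_vec (lift u) = dim_vec u" unfolding lift_def by simp

lemma of_int_lift[simp]: "i < dim_vec u \<Longrightarrow> (of_int (lift u $ i) :: bit) = u $ i"
  unfolding lift_def by (cases "u $ i") auto

lemma F2_Tv: assumes u: "dim_vec u = 2*g" and N: "N \<noteq> 0"
  shows "F2 N g (Tv N g (lift u)) = tens u u"
proof -
  have dP: "dim_row (Pm (lift u)) = 2*g" "dim_col (Pm (lift u)) = 2*g" using u by auto
  have "Mof N g (Tv N g (lift u)) = Pm (lift u) * Jmat g"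
    unfolding Tv_def by (rule Mof_form) (use dP N in \<open>auto intro!: carrier_matI\<close>)
  then have "F2 N g (Tv N g (lift u)) = red2 (Pm (lift u) * (Jmat g * Jmat g))"
    unfolding F2_def using dP by (simp add: mx_assoc)
  also have "\<dots> = red2 (Pm (lift u)) * red2 (Jmat g * Jmat g)"
    by (rule red2_mult) (simp add: dP u)
  also have "red2 (Jmat g * Jmat g) = 1\<^sub>m (2*g)" unfolding J_J red2_uminus by simp
  also have "red2 (Pm (lift u)) * 1\<^sub>m (2*g) = tens u u"
    by (rule eq_matI) (use u in simp_all)
  finally show ?thesis .
qed

lemma F1_Tv: assumes u: "dim_vec u = 2*g" and N: "N \<noteq> 0"
  shows "F1 N g (Tv N g (lift u)) = u"
proof (rule eq_vecI)
  fix i assume "i < dim_vec u"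
  then show "F1 N g (Tv N g (lift u)) $ i = u $ i"
    unfolding F1_def F2_Tv[OF u N] using u by (cases "u $ i") simp_all
qed (simp add: F1_def u)


declare assoc_mult_mat[simp del]
declare add_bit_eq_xor[simp del] mult_bit_eq_and[simp del]

lemma matgrp_simps[simp]: "carrier (matgrp g S) = S" "mult (matgrp g S) = (*)" "one (matgrp g S) = 1\<^sub>m (2*g)"
  unfolding matgrp_def by simp_all

lemma Gamma_group: "group (matgrp g (Gamma g N))"
proof (rule groupI)
  fix x y z assume x: "x \<in> carrier (matgrp g (Gamma g N))" and y: "y \<in> carrier (matgrp g (Gamma g N))"
    and z: "z \<in> carrier (matgrp g (Gamma g N))"
  show "x \<otimes>\<^bsub>matgrp g (Gamma g N)\<^esub> y \<otimes>\<^bsub>matgrp g (Gamma g N)\<^esub> z = x \<otimes>\<^bsub>matgrp g (Gamma g N)\<^esub> (y \<otimes>\<^bsub>matgrp g (Gamma g N)\<^esub> z)"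
    using Gamma_dims[of x g N] Gamma_dims[of y g N] Gamma_dims[of z g N] x y z by (simp add: mx_assoc)
next
  fix x y assume x: "x \<in> carrier (matgrp g (Gamma g N))" and y: "y \<in> carrier (matgrp g (Gamma g N))"
  show "x \<otimes>\<^bsub>matgrp g (Gamma g N)\<^esub> y \<in> carrier (matgrp g (Gamma g N))" using Gamma_mult x y by simp
next
  show "\<one>\<^bsub>matgrp g (Gamma g N)\<^esub> \<in> carrier (matgrp g (Gamma g N))" using Gamma_one by simp
next
  fix x assume x: "x \<in> carrier (matgrp g (Gamma g N))"
  show "\<one>\<^bsub>matgrp g (Gamma g N)\<^esub> \<otimes>\<^bsub>matgrp g (Gamma g N)\<^esub> x = x" using Gamma_dims[of x g N] x by simp
  show "\<exists>y\<in>carrier (matgrp g (Gamma g N)). y \<otimes>\<^bsub>matgrp g (Gamma g N)\<^esub> x = \<one>\<^bsub>matgrp g (Gamma g N)\<^esub>"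
    using Gamma_inv(1)[of x g N] spinv_left[OF Gamma_Sp[of x g N]] x by auto
qed

lemma Ugrp_simps[simp]: "carrier (Ugrp g) = carrier_vec (2*g)" "mult (Ugrp g) = (+)" "one (Ugrp g) = 0\<^sub>v (2*g)"
  unfolding Ugrp_def by simp_all

lemma Ugrp_group: "group (Ugrp g)"
proof (rule groupI)
  fix x y z assume "x \<in> carrier (Ugrp g)" "y \<in> carrier (Ugrp g)" "z \<in> carrier (Ugrp g)"
  then show "x \<otimes>\<^bsub>Ugrp g\<^esub> y \<otimes>\<^bsub>Ugrp g\<^esub> z = x \<otimes>\<^bsub>Ugrp g\<^esub> (y \<otimes>\<^bsub>Ugrp g\<^esub> z)"
    by (simp add: assoc_add_vec)
next
  fix x y assume "x \<in> carrier (Ugrp g)" "y \<in> carrier (Ugrp g)"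
  then show "x \<otimes>\<^bsub>Ugrp g\<^esub> y \<in> carrier (Ugrp g)" by simp
next
  show "\<one>\<^bsub>Ugrp g\<^esub> \<in> carrier (Ugrp g)" by simp
next
  fix x assume x: "x \<in> carrier (Ugrp g)"
  then show "\<one>\<^bsub>Ugrp g\<^esub> \<otimes>\<^bsub>Ugrp g\<^esub> x = x" by simp
  have "x + x = 0\<^sub>v (2*g)" by (rule eq_vecI) (use x in auto)
  then show "\<exists>y\<in>carrier (Ugrp g). y \<otimes>\<^bsub>Ugrp g\<^esub> x = \<one>\<^bsub>Ugrp g\<^esub>" using x by auto
qed

lemma Lambda2grp_simps[simp]: "carrier (Lambda2grp g) = Lambda2 g" "mult (Lambda2grp g) = (+)" "one (Lambda2grp g) = 0\<^sub>m (2*g) (2*g)"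
  unfolding Lambda2grp_def by simp_all

lemma Alt_add: "A \<in> Alt n \<Longrightarrow> B \<in> Alt n \<Longrightarrow> A + B \<in> Alt n"
  using AltD[of A n] AltD[of B n] by (intro AltI) auto

lemma Lambda2grp_group: "group (Lambda2grp g)"
proof (rule groupI)
  fix x y z assume "x \<in> carrier (Lambda2grp g)" "y \<in> carrier (Lambda2grp g)" "z \<in> carrier (Lambda2grp g)"
  then have "dim_row x = 2*g" "dim_col x = 2*g" "dim_row y = 2*g" "dim_col y = 2*g" "dim_row z = 2*g" "dim_col z = 2*g"
    using AltD[of _ "2*g"] unfolding Lambda2grp_simps Lambda2_eq by auto
  then show "x \<otimes>\<^bsub>Lambda2grp g\<^esub> y \<otimes>\<^bsub>Lambda2grp g\<^esub> z = x \<otimes>\<^bsub>Lambda2grp g\<^esub> (y \<otimes>\<^bsub>Lambda2grp g\<^esub> z)"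
    by (simp add: mx_add_assoc)
next
  fix x y assume "x \<in> carrier (Lambda2grp g)" "y \<in> carrier (Lambda2grp g)"
  then show "x \<otimes>\<^bsub>Lambda2grp g\<^esub> y \<in> carrier (Lambda2grp g)" unfolding Lambda2grp_simps Lambda2_eq by (simp add: Alt_add)
next
  show "\<one>\<^bsub>Lambda2grp g\<^esub> \<in> carrier (Lambda2grp g)" by (simp add: Lambda2.zero)
next
  fix x assume x: "x \<in> carrier (Lambda2grp g)"
  then have d: "dim_row x = 2*g" "dim_col x = 2*g" using AltD[of _ "2*g"] unfolding Lambda2grp_simps Lambda2_eq by auto
  then show "\<one>\<^bsub>Lambda2grp g\<^esub> \<otimes>\<^bsub>Lambda2grp g\<^esub> x = x" by (intro eq_matI) auto
  have "x + x = 0\<^sub>m (2*g) (2*g)" by (rule eq_matI) (use d in auto)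
  then show "\<exists>y\<in>carrier (Lambda2grp g). y \<otimes>\<^bsub>Lambda2grp g\<^esub> x = \<one>\<^bsub>Lambda2grp g\<^esub>" using x by auto
qed

lemma F1_hom: assumes N: "N \<noteq> 0" "even N" shows "F1 N g \<in> hom (matgrp g (Gamma g N)) (Ugrp g)"
  unfolding hom_def using F1_mult[OF _ _ N] by auto

lemma F1_group_hom: assumes N: "N \<noteq> 0" "even N" shows "group_hom (matgrp g (Gamma g N)) (Ugrp g) (F1 N g)"
  unfolding group_hom_def group_hom_axioms_def using Gamma_group Ugrp_group F1_hom[OF N] by auto

lemma Igusa_sub: "Igusa g N \<subseteq> Gamma g N" unfolding Igusa_def by auto

lemma F1_kernel: assumes N: "N \<noteq> 0" "even N" shows "kernel (matgrp g (Gamma g N)) (Ugrp g) (F1 N g) = Igusa g N"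
proof -
  have "X \<in> Gamma g N \<and> F1 N g X = 0\<^sub>v (2*g) \<longleftrightarrow> X \<in> Igusa g N" for X
    using Igusa_char[OF _ N, of X g] subsetD[OF Igusa_sub[of g N], of X] by blast
  then show ?thesis unfolding kernel_def by auto
qed

lemma F1_onto: assumes N: "N \<noteq> 0" "even N" shows "F1 N g ` carrier (matgrp g (Gamma g N)) = carrier (Ugrp g)"
proof
  show "F1 N g ` carrier (matgrp g (Gamma g N)) \<subseteq> carrier (Ugrp g)" by auto
  show "carrier (Ugrp g) \<subseteq> F1 N g ` carrier (matgrp g (Gamma g N))"
  proof
    fix u assume "u \<in> carrier (Ugrp g)"
    then have u: "dim_vec u = 2*g" by auto
    show "u \<in> F1 N g ` carrier (matgrp g (Gamma g N))"
      using F1_Tv[OF u N(1)] Tv_Gamma[of "lift u" g N] u by (auto intro!: image_eqI[of u _ "Tv N g (lift u)"])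
  qed
qed

lemma Igusa_group: assumes N: "N \<noteq> 0" "even N" shows "group (matgrp g (Igusa g N))"
proof -
  have "subgroup (Igusa g N) (matgrp g (Gamma g N))"
    using group_hom.subgroup_kernel[OF F1_group_hom[OF N]] F1_kernel[OF N] by simp
  from subgroup.subgroup_is_group[OF this Gamma_group]
  show ?thesis unfolding matgrp_def by simp
qed

lemma F2_Igusa_Alt: assumes X: "X \<in> Igusa g N" and N: "N \<noteq> 0" "even N" shows "F2 N g X \<in> Alt (2*g)"
proof -
  have XG: "X \<in> Gamma g N" using X Igusa_sub by auto
  have F: "F1 N g X = 0\<^sub>v (2*g)" using Igusa_char[OF XG N] X by simp
  have sym: "transpose_mat (F2 N g X) = F2 N g X" by (rule F2_sym[OF XG N])
  show ?thesis unfolding Alt_def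
  proof (intro CollectI conjI allI impI)
    fix i assume i: "i < 2*g"
    show "F2 N g X $$ (i,i) = 0" using arg_cong[OF F, of "\<lambda>v. v $ i"] i by (simp add: F1_def)
  qed (simp_all add: sym)
qed

lemma F2_hom: assumes N: "N \<noteq> 0" "even N" shows "F2 N g \<in> hom (matgrp g (Igusa g N)) (Lambda2grp g)"
  unfolding hom_def Lambda2grp_simps Lambda2_eq
  using F2_mult[OF _ _ N] F2_Igusa_Alt[OF _ N] subsetD[OF Igusa_sub[of g N]] by auto

lemma F2_group_hom: assumes N: "N \<noteq> 0" "even N" shows "group_hom (matgrp g (Igusa g N)) (Lambda2grp g) (F2 N g)"
  unfolding group_hom_def group_hom_axioms_def using Igusa_group[OF N] Lambda2grp_group F2_hom[OF N] by auto

lemma F2_zero_iff: assumes X: "X \<in> Gamma g N" shows "F2 N g X = 0\<^sub>m (2*g) (2*g) \<longleftrightarrow> red2 (Mof N g X) = 0\<^sub>m (2*g) (2*g)"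
proof
  assume F: "F2 N g X = 0\<^sub>m (2*g) (2*g)"
  have "red2 (Mof N g X) = red2 (Mof N g X) * (red2 (Jmat g) * red2 (Jmat g))"
    unfolding red2_JJ by simp
  also have "\<dots> = F2 N g X * red2 (Jmat g)"
    unfolding F2_def by (simp add: red2_mult mx_assoc)
  finally show "red2 (Mof N g X) = 0\<^sub>m (2*g) (2*g)" unfolding F by simp
next
  assume R: "red2 (Mof N g X) = 0\<^sub>m (2*g) (2*g)"
  show "F2 N g X = 0\<^sub>m (2*g) (2*g)" unfolding F2_def by (simp add: red2_mult R)
qed

lemma Gamma_2N: assumes N: "N \<noteq> 0" shows "X \<in> Gamma g (2*N) \<longleftrightarrow> X \<in> Gamma g N \<and> red2 (Mof N g X) = 0\<^sub>m (2*g) (2*g)"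
proof
  assume X: "X \<in> Gamma g (2*N)"
  have XG: "X \<in> Gamma g N" unfolding Gamma_def
  proof (intro CollectI conjI allI impI)
    show "X \<in> Sp g" using Gamma_Sp[OF X] .
    fix i j assume "i < 2*g" "j < 2*g"
    then have "2*N dvd (X - 1\<^sub>m (2*g)) $$ (i,j)" using X unfolding Gamma_def by auto
    then show "N dvd (X - 1\<^sub>m (2*g)) $$ (i,j)" by (rule dvd_mult_right)
  qed
  have d: "dim_row X = 2*g" "dim_col X = 2*g" using Gamma_dims[OF X] by auto
  have "red2 (Mof N g X) = 0\<^sub>m (2*g) (2*g)"
  proof (rule eq_matI)
    fix i j assume "i < dim_row (0\<^sub>m (2*g) (2*g) :: bit mat)" "j < dim_col (0\<^sub>m (2*g) (2*g) :: bit mat)"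
    then have i: "i < 2*g" and j: "j < 2*g" by auto
    have "2*N dvd (X - 1\<^sub>m (2*g)) $$ (i,j)" using X i j unfolding Gamma_def by auto
    then obtain c where c: "X $$ (i,j) - (if i = j then 1 else 0) = 2 * N * c" using i j d by (auto elim!: dvdE)
    show "red2 (Mof N g X) $$ (i,j) = 0\<^sub>m (2*g) (2*g) $$ (i,j)"
      using i j N c by (simp add: Mof_def bit_of_int mult.commute[of 2 N] mult.assoc)
  qed simp_all
  then show "X \<in> Gamma g N \<and> red2 (Mof N g X) = 0\<^sub>m (2*g) (2*g)" using XG by simp
next
  assume a: "X \<in> Gamma g N \<and> red2 (Mof N g X) = 0\<^sub>m (2*g) (2*g)"
  then have X: "X \<in> Gamma g N" and R: "red2 (Mof N g X) = 0\<^sub>m (2*g) (2*g)" by auto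
  have "2*N dvd (X - 1\<^sub>m (2*g)) $$ (i,j)" if i: "i < 2*g" and j: "j < 2*g" for i j
  proof -
    have ev: "even (Mof N g X $$ (i,j))"
      using arg_cong[OF R, of "\<lambda>A. A $$ (i,j)"] i j by (simp add: bit_of_int split: if_splits)
    have "(X - 1\<^sub>m (2*g)) $$ (i,j) = N * Mof N g X $$ (i,j)"
      using arg_cong[OF Gamma_decomp[OF X], of "\<lambda>A. (A - 1\<^sub>m (2*g)) $$ (i,j)"] i j by simp
    then show ?thesis using ev by (auto elim!: evenE)
  qed
  then show "X \<in> Gamma g (2*N)" using Gamma_Sp[OF X] unfolding Gamma_def by auto
qed

lemma F2_kernel: assumes N: "N \<noteq> 0" "even N"
  shows "kernel (matgrp g (Igusa g N)) (Lambda2grp g) (F2 N g) = Gamma g (2*N)"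
proof -
  have "X \<in> Igusa g N \<and> F2 N g X = 0\<^sub>m (2*g) (2*g) \<longleftrightarrow> X \<in> Gamma g (2*N)" for X
  proof
    assume "X \<in> Igusa g N \<and> F2 N g X = 0\<^sub>m (2*g) (2*g)"
    then show "X \<in> Gamma g (2*N)" using Gamma_2N[OF N(1)] F2_zero_iff Igusa_sub by blast
  next
    assume X2: "X \<in> Gamma g (2*N)"
    then have X: "X \<in> Gamma g N" and F: "F2 N g X = 0\<^sub>m (2*g) (2*g)"
      using Gamma_2N[OF N(1)] F2_zero_iff by blast+
    have "F1 N g X = 0\<^sub>v (2*g)" unfolding F1_def F by (rule eq_vecI) auto
    then show "X \<in> Igusa g N \<and> F2 N g X = 0\<^sub>m (2*g) (2*g)" using Igusa_char[OF X N] F by simp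
  qed
  then show ?thesis unfolding kernel_def by auto
qed


declare assoc_mult_mat[simp del]
declare add_bit_eq_xor[simp del] mult_bit_eq_and[simp del]

lemma Igusa_mult: assumes X: "X \<in> Igusa g N" and Z: "Z \<in> Igusa g N" and N: "N \<noteq> 0" "even N"
  shows "X * Z \<in> Igusa g N"
proof -
  have XG: "X \<in> Gamma g N" and ZG: "Z \<in> Gamma g N" using X Z Igusa_sub by auto
  have "F1 N g X = 0\<^sub>v (2*g)" "F1 N g Z = 0\<^sub>v (2*g)" using Igusa_char[OF XG N] Igusa_char[OF ZG N] X Z by auto
  then have "F1 N g (X * Z) = 0\<^sub>v (2*g)" unfolding F1_mult[OF XG ZG N] by simp
  then show ?thesis using Igusa_char[OF Gamma_mult[OF XG ZG] N] by simp
qed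

lemma Mof_one: "Mof N g (1\<^sub>m (2*g)) = 0\<^sub>m (2*g) (2*g)"
  by (rule eq_matI) (auto simp: Mof_def)

lemma F2_one: "F2 N g (1\<^sub>m (2*g)) = 0\<^sub>m (2*g) (2*g)"
  unfolding F2_def Mof_one by (rule eq_matI) auto

lemma Igusa_one: assumes N: "N \<noteq> 0" "even N" shows "1\<^sub>m (2*g) \<in> Igusa g N"
proof -
  have "F1 N g (1\<^sub>m (2*g)) = 0\<^sub>v (2*g)" unfolding F1_def F2_one by (rule eq_vecI) auto
  then show ?thesis using Igusa_char[OF Gamma_one N] by simp
qed

lemma bit_cross: "(a::bit) * b + c * d + (a + c) * (b + d) = a * d + c * b"
  by (cases a; cases b; cases c; cases d) simp_all

lemma F2_onto: assumes N: "N \<noteq> 0" "even N" shows "F2 N g ` Igusa g N = Lambda2 g"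
proof
  show "F2 N g ` Igusa g N \<subseteq> Lambda2 g"
    using F2_Igusa_Alt[OF _ N] Lambda2_eq by auto
  show "Lambda2 g \<subseteq> F2 N g ` Igusa g N"
  proof
    fix M assume "M \<in> Lambda2 g"
    then show "M \<in> F2 N g ` Igusa g N"
    proof (induction rule: Lambda2.induct)
      case zero
      show ?case using F2_one[of N g] Igusa_one[OF N, of g] by (auto intro!: image_eqI[of _ _ "1\<^sub>m (2*g)"])
    next
      case (add M u u')
      then obtain X where X: "X \<in> Igusa g N" and M: "M = F2 N g X" by auto
      have u: "dim_vec u = 2*g" and u': "dim_vec u' = 2*g" using add.hyps by auto
      have uu: "dim_vec (u + u') = 2*g" using u' by simp
      define T1 where "T1 = Tv N g (lift u)"
      define T2 where "T2 = Tv N g (lift u')"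
      define T3 where "T3 = Tv N g (lift (u + u'))"
      have G1: "T1 \<in> Gamma g N" unfolding T1_def by (rule Tv_Gamma) (simp add: u)
      have G2: "T2 \<in> Gamma g N" unfolding T2_def by (rule Tv_Gamma) (simp add: u')
      have G3: "T3 \<in> Gamma g N" unfolding T3_def by (rule Tv_Gamma) (simp add: u')
      define Z where "Z = T1 * T2 * T3"
      have ZG: "Z \<in> Gamma g N" unfolding Z_def using Gamma_mult G1 G2 G3 by blast
      have FZ: "F2 N g Z = tens u u' + tens u' u"
      proof -
        have "F2 N g Z = tens u u + tens u' u' + tens (u + u') (u + u')"
          unfolding Z_def F2_mult[OF Gamma_mult[OF G1 G2] G3 N] F2_mult[OF G1 G2 N]
          unfolding T1_def T2_def T3_def F2_Tv[OF u N(1)] F2_Tv[OF u' N(1)] F2_Tv[OF uu N(1)] ..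
        also have "\<dots> = tens u u' + tens u' u"
          by (rule eq_matI) (use u u' in \<open>simp_all add: bit_cross\<close>)
        finally show ?thesis .
      qed
      have "F1 N g Z = 0\<^sub>v (2*g)"
        unfolding F1_def FZ by (rule eq_vecI) (use u u' in \<open>simp_all add: mult.commute\<close>)
      then have ZI: "Z \<in> Igusa g N" using Igusa_char[OF ZG N] by simp
      have "F2 N g (X * Z) = M + (tens u u' + tens u' u)"
        unfolding F2_mult[OF subsetD[OF Igusa_sub X] ZG N] M FZ ..
      then show ?case using Igusa_mult[OF X ZI N] by (auto intro!: image_eqI[of _ _ "X * Z"])
    qed
  qed
qed

lemma rcoset_mat: "r_coset (matgrp g S) H a = (\<lambda>h. h * a) ` H"
  unfolding r_coset_def by auto

lemma FactGroup_carrier_mat: assumes "S \<in> carrier (matgrp g G Mod H)"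
  obtains a where "a \<in> G" "S = (\<lambda>h. h * a) ` H"
  using assms unfolding FactGroup_def RCOSETS_def rcoset_mat by auto

lemma conj_image: "conjset X Xi ((\<lambda>h. h * a) ` H) = (\<lambda>h. X * (h * a) * Xi) ` H"
  unfolding conjset_def by auto


theorem proposition5p2:
  fixes g n :: nat
  assumes "g \<ge> 1" and "n \<ge> 1"
  shows "(\<exists>\<phi>. \<phi> \<in> iso (matgrp g (Gamma g (2^n)) Mod Igusa g (2^n)) (Ugrp g) \<and>
            (\<forall>X \<in> Sp g. \<forall>Xi \<in> carrier_mat (2*g) (2*g). X * Xi = 1\<^sub>m (2*g) \<longrightarrow>
               (\<forall>S \<in> carrier (matgrp g (Gamma g (2^n)) Mod Igusa g (2^n)).
                  \<phi> (conjset X Xi S) = red2 X *\<^sub>v \<phi> S)))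
       \<and> (\<exists>\<psi>. \<psi> \<in> iso (matgrp g (Igusa g (2^n)) Mod Gamma g (2^(n+1))) (Lambda2grp g) \<and>
            (\<forall>X \<in> Sp g. \<forall>Xi \<in> carrier_mat (2*g) (2*g). X * Xi = 1\<^sub>m (2*g) \<longrightarrow>
               (\<forall>S \<in> carrier (matgrp g (Igusa g (2^n)) Mod Gamma g (2^(n+1))).
                  \<psi> (conjset X Xi S) = red2 X * \<psi> S * transpose_mat (red2 X))))"
proof -
  define N :: int where "N = 2^n"
  have N: "N \<noteq> 0" "even N" using assms(2) unfolding N_def by auto
  have N2: "(2::int)^(n+1) = 2 * N" unfolding N_def by simp
  interpret h1: group_hom "matgrp g (Gamma g N)" "Ugrp g" "F1 N g" by (rule F1_group_hom[OF N])
  interpret h2: group_hom "matgrp g (Igusa g N)" "Lambda2grp g" "F2 N g" by (rule F2_group_hom[OF N])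
  have iso1: "(\<lambda>S. the_elem (F1 N g ` S)) \<in> iso (matgrp g (Gamma g N) Mod Igusa g N) (Ugrp g)"
    using h1.FactGroup_iso_set[OF F1_onto[OF N]] unfolding F1_kernel[OF N] .
  have onto2: "F2 N g ` carrier (matgrp g (Igusa g N)) = carrier (Lambda2grp g)"
    using F2_onto[OF N] by simp
  have iso2: "(\<lambda>S. the_elem (F2 N g ` S)) \<in> iso (matgrp g (Igusa g N) Mod Gamma g (2*N)) (Lambda2grp g)"
    using h2.FactGroup_iso_set[OF onto2] unfolding F2_kernel[OF N] .
  have eq1: "\<forall>X \<in> Sp g. \<forall>Xi \<in> carrier_mat (2*g) (2*g). X * Xi = 1\<^sub>m (2*g) \<longrightarrow>
               (\<forall>S \<in> carrier (matgrp g (Gamma g N) Mod Igusa g N).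
                  the_elem (F1 N g ` conjset X Xi S) = red2 X *\<^sub>v the_elem (F1 N g ` S))"
  proof (intro ballI impI)
    fix X Xi S assume X: "X \<in> Sp g" and Xi: "Xi \<in> carrier_mat (2*g) (2*g)" and XXi: "X * Xi = 1\<^sub>m (2*g)"
      and S: "S \<in> carrier (matgrp g (Gamma g N) Mod Igusa g N)"
    obtain a where a: "a \<in> Gamma g N" and Sa: "S = (\<lambda>h. h * a) ` Igusa g N"
      using FactGroup_carrier_mat[OF S] by blast
    have c: "F1 N g (h * a) = F1 N g a" if h: "h \<in> Igusa g N" for h
    proof -
      have hG: "h \<in> Gamma g N" using subsetD[OF Igusa_sub h] .
      have "F1 N g h = 0\<^sub>v (2*g)" using Igusa_char[OF hG N] h by simp
      then show ?thesis unfolding F1_mult[OF hG a N] by simp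
    qed
    have c2: "F1 N g (X * (h * a) * Xi) = red2 X *\<^sub>v F1 N g a" if h: "h \<in> Igusa g N" for h
      using F1_conj[OF Gamma_mult[OF subsetD[OF Igusa_sub h] a] X Xi XXi N] c[OF h] by simp
    have one: "1\<^sub>m (2*g) * a = a" using Gamma_dims[OF a] by simp
    have ne: "Igusa g N \<noteq> {}" using Igusa_one[OF N, of g] by auto
    have i1: "F1 N g ` S = {F1 N g a}"
    proof -
      have "F1 N g ` S = (\<lambda>h. F1 N g (h * a)) ` Igusa g N" unfolding Sa image_image ..
      also have "\<dots> = (\<lambda>h. F1 N g a) ` Igusa g N" by (rule image_cong) (simp_all add: c)
      finally show ?thesis using ne by (simp add: image_constant_conv)
    qed
    have i2: "F1 N g ` conjset X Xi S = {red2 X *\<^sub>v F1 N g a}"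
    proof -
      have "F1 N g ` conjset X Xi S = (\<lambda>h. F1 N g (X * (h * a) * Xi)) ` Igusa g N" unfolding Sa conj_image image_image ..
      also have "\<dots> = (\<lambda>h. red2 X *\<^sub>v F1 N g a) ` Igusa g N" by (rule image_cong) (simp_all add: c2)
      finally show ?thesis using ne by (simp add: image_constant_conv)
    qed
    show "the_elem (F1 N g ` conjset X Xi S) = red2 X *\<^sub>v the_elem (F1 N g ` S)"
      unfolding i1 i2 by simp
  qed
  have eq2: "\<forall>X \<in> Sp g. \<forall>Xi \<in> carrier_mat (2*g) (2*g). X * Xi = 1\<^sub>m (2*g) \<longrightarrow>
               (\<forall>S \<in> carrier (matgrp g (Igusa g N) Mod Gamma g (2*N)).
                  the_elem (F2 N g ` conjset X Xi S) = red2 X * the_elem (F2 N g ` S) * transpose_mat (red2 X))"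
  proof (intro ballI impI)
    fix X Xi S assume X: "X \<in> Sp g" and Xi: "Xi \<in> carrier_mat (2*g) (2*g)" and XXi: "X * Xi = 1\<^sub>m (2*g)"
      and S: "S \<in> carrier (matgrp g (Igusa g N) Mod Gamma g (2*N))"
    obtain a where a: "a \<in> Igusa g N" and Sa: "S = (\<lambda>h. h * a) ` Gamma g (2*N)"
      using FactGroup_carrier_mat[OF S] by blast
    have aG: "a \<in> Gamma g N" using subsetD[OF Igusa_sub a] .
    have c: "F2 N g (h * a) = F2 N g a" if h: "h \<in> Gamma g (2*N)" for h
    proof -
      have hG: "h \<in> Gamma g N" and hr: "red2 (Mof N g h) = 0\<^sub>m (2*g) (2*g)" using h Gamma_2N[OF N(1)] by auto
      have "F2 N g h = 0\<^sub>m (2*g) (2*g)" using F2_zero_iff[OF hG] hr by simp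
      then show ?thesis unfolding F2_mult[OF hG aG N] by simp
    qed
    have c2: "F2 N g (X * (h * a) * Xi) = red2 X * F2 N g a * transpose_mat (red2 X)" if h: "h \<in> Gamma g (2*N)" for h
    proof -
      have hG: "h \<in> Gamma g N" using h Gamma_2N[OF N(1)] by auto
      show ?thesis using F2_conj[OF Gamma_mult[OF hG aG] X Xi XXi N(1)] c[OF h] by simp
    qed
    have one: "1\<^sub>m (2*g) * a = a" using Gamma_dims[OF aG] by simp
    have ne: "Gamma g (2*N) \<noteq> {}" using Gamma_one[of g "2*N"] by auto
    have i1: "F2 N g ` S = {F2 N g a}"
    proof -
      have "F2 N g ` S = (\<lambda>h. F2 N g (h * a)) ` Gamma g (2*N)" unfolding Sa image_image ..
      also have "\<dots> = (\<lambda>h. F2 N g a) ` Gamma g (2*N)" by (rule image_cong) (simp_all add: c)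
      finally show ?thesis using ne by (simp add: image_constant_conv)
    qed
    have i2: "F2 N g ` conjset X Xi S = {red2 X * F2 N g a * transpose_mat (red2 X)}"
    proof -
      have "F2 N g ` conjset X Xi S = (\<lambda>h. F2 N g (X * (h * a) * Xi)) ` Gamma g (2*N)" unfolding Sa conj_image image_image ..
      also have "\<dots> = (\<lambda>h. red2 X * F2 N g a * transpose_mat (red2 X)) ` Gamma g (2*N)" by (rule image_cong) (simp_all add: c2)
      finally show ?thesis using ne by (simp add: image_constant_conv)
    qed
    show "the_elem (F2 N g ` conjset X Xi S) = red2 X * the_elem (F2 N g ` S) * transpose_mat (red2 X)"
      unfolding i1 i2 by simp
  qed
  show ?thesis unfolding N_def[symmetric] N2
    using iso1 eq1 iso2 eq2 by blast
qed


end
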